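(* Let $p\in[0,1]^N$ and let $\mathcal L:=\{i\in\{\tilde k+1,\dots,N\}:B^{\mathcal N}_{1:i}=i-1\}$. Then $$\mathcal L=\{\tilde k(p'):\ p'\in[0,1]^N,\ \|p-p'\|_0\le1,\ \tilde k(p')>\tilde k\}.$$
   Context: $q\in(0,1)$, $N\ge1$. For $x\in[0,1]^N$, $B^{\mathcal N}_{1:i}(x)=|\{j\in\{1,\dots,N\}:0\le x_j<iq/N\}|$ ($B^{\mathcal N}_{1:0}=0$) and $\tilde k(x)=\max\{i\in\{0,\dots,N\}:B^{\mathcal N}_{1:i}(x)=i\}$ is the Benjamini–Hochberg rejection count. Write $B^{\mathcal N}_{1:i}=B^{\mathcal N}_{1:i}(p)$ and $\tilde k=\tilde k(p)$. $\|p-p'\|_0$ is the number of indices at which $p$ and $p'$ differ. *)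

theory Defs
  imports Complex_Main
begin

text \<open>Vectors in [0,1]^N are represented as functions nat \<Rightarrow> real, coordinates indexed by 1..N.\<close>

definition in_unit_cube :: "nat \<Rightarrow> (nat \<Rightarrow> real) \<Rightarrow> bool" where
  "in_unit_cube N x \<longleftrightarrow> (\<forall>j\<in>{1..N}. 0 \<le> x j \<and> x j \<le> 1)"

definition BN :: "real \<Rightarrow> nat \<Rightarrow> (nat \<Rightarrow> real) \<Rightarrow> nat \<Rightarrow> nat" where
  "BN q N x i = card {j\<in>{1..N}. 0 \<le> x j \<and> x j < real i * q / real N}"

definition ktilde :: "real \<Rightarrow> nat \<Rightarrow> (nat \<Rightarrow> real) \<Rightarrow> nat" where
  "ktilde q N x = Max {i\<in>{0..N}. BN q N x i = i}"

definition hamming0 :: "nat \<Rightarrow> (nat \<Rightarrow> real) \<Rightarrow> (nat \<Rightarrow> real) \<Rightarrow> nat" where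
  "hamming0 N x y = card {j\<in>{1..N}. x j \<noteq> y j}"

end

theory Submission
  imports Defs
begin

lemma BN_0: "BN q N x 0 = 0"
  unfolding BN_def by simp

lemma BN_le: "BN q N x i \<le> N"
proof -
  have "BN q N x i \<le> card {1..N}" unfolding BN_def by (rule card_mono) auto
  then show ?thesis by simp
qed

lemma BN_mono:
  assumes "0 \<le> q" "i \<le> i'"
  shows "BN q N x i \<le> BN q N x i'"
proof -
  have "real i * q / real N \<le> real i' * q / real N"
    using assms by (intro divide_right_mono mult_right_mono) auto
  then show ?thesis unfolding BN_def by (intro card_mono) auto
qed

lemma kt_mem: "BN q N x (ktilde q N x) = ktilde q N x \<and> ktilde q N x \<le> N"
proof -
  have f: "finite {i\<in>{0..N}. BN q N x i = i}" by simp
  have ne: "0 \<in> {i\<in>{0..N}. BN q N x i = i}" by (simp add: BN_0)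
  have "ktilde q N x \<in> {i\<in>{0..N}. BN q N x i = i}"
    unfolding ktilde_def using f ne by (intro Max_in) auto
  then show ?thesis by simp
qed

lemma kt_max: "i \<le> N \<Longrightarrow> BN q N x i = i \<Longrightarrow> i \<le> ktilde q N x"
  unfolding ktilde_def by (intro Max_ge) auto

lemma no_above:
  assumes "0 \<le> q" "ktilde q N x < k" "k \<le> N"
  shows "BN q N x k \<le> k"
proof (rule ccontr)
  assume "\<not> ?thesis"
  then have b: "BN q N x k > k" by simp
  have all: "\<forall>m. k + m \<le> N \<longrightarrow> BN q N x (k+m) > k+m"
  proof
    fix m show "k + m \<le> N \<longrightarrow> BN q N x (k+m) > k+m"
    proof (induction m)
      case 0 then show ?case using b by simp
    next
      case (Suc m)
      show ?case
      proof
        assume h: "k + Suc m \<le> N"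
        have "BN q N x (k+m) \<le> BN q N x (k + Suc m)" using assms(1) by (rule BN_mono) simp
        with Suc h have ge: "BN q N x (k + Suc m) \<ge> k + Suc m" by simp
        have "BN q N x (k + Suc m) \<noteq> k + Suc m"
          using kt_max[OF h, of q x] assms(2) by auto
        with ge show "BN q N x (k + Suc m) > k + Suc m" by simp
      qed
    qed
  qed
  have e: "k + (N - k) = N" using assms(3) by simp
  have "BN q N x N > N" using all[rule_format, of "N - k"] e by simp
  with BN_le[of q N x N] show False by simp
qed

lemma BN_ham:
  assumes "hamming0 N x y \<le> 1"
  shows "BN q N y i \<le> BN q N x i + 1"
proof -
  let ?D = "{j\<in>{1..N}. x j \<noteq> y j}"
  let ?Sx = "{j\<in>{1..N}. 0 \<le> x j \<and> x j < real i * q / real N}"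
  let ?Sy = "{j\<in>{1..N}. 0 \<le> y j \<and> y j < real i * q / real N}"
  have "?Sy \<subseteq> ?Sx \<union> ?D" by auto
  then have "card ?Sy \<le> card (?Sx \<union> ?D)" by (intro card_mono) auto
  also have "\<dots> \<le> card ?Sx + card ?D" by (rule card_Un_le)
  finally show ?thesis using assms unfolding BN_def hamming0_def by simp
qed

theorem proposition1:
  fixes q :: real and N :: nat and p :: "nat \<Rightarrow> real"
  assumes "0 < q" "q < 1" "1 \<le> N" "in_unit_cube N p"
  shows "{i\<in>{ktilde q N p + 1..N}. BN q N p i = i - 1}
       = {ktilde q N p' | p'. in_unit_cube N p' \<and> hamming0 N p p' \<le> 1
                              \<and> ktilde q N p' > ktilde q N p}"
proof (intro equalityI subsetI)
  fix k assume "k \<in> {ktilde q N p' | p'. in_unit_cube N p' \<and> hamming0 N p p' \<le> 1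
                              \<and> ktilde q N p' > ktilde q N p}"
  then obtain p' where k: "k = ktilde q N p'" and h: "hamming0 N p p' \<le> 1"
    and gt: "ktilde q N p' > ktilde q N p" by blast
  have m: "BN q N p' k = k" "k \<le> N" using kt_mem[of q N p'] k by auto
  have a: "BN q N p k \<le> k" using no_above[of q N p k] assms(1) gt k m by auto
  have b: "BN q N p k \<noteq> k" using kt_max[OF m(2), of q p] gt k by auto
  have c: "BN q N p' k \<le> BN q N p k + 1" using BN_ham[OF h] .
  from a b c m show "k \<in> {i\<in>{ktilde q N p + 1..N}. BN q N p i = i - 1}"
    using gt k by auto
next
  fix i assume "i \<in> {i\<in>{ktilde q N p + 1..N}. BN q N p i = i - 1}"
  then have i1: "ktilde q N p < i" and i2: "i \<le> N" and bi: "BN q N p i = i - 1" by auto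
  let ?t = "\<lambda>m::nat. real m * q / real N"
  let ?S = "\<lambda>m. {j\<in>{1..N}. 0 \<le> p j \<and> p j < ?t m}"
  define A where "A = {j\<in>{1..N}. p j \<ge> ?t i}"
  have Ane: "A \<noteq> {}"
  proof
    assume "A = {}"
    then have "?S i = {1..N}" using assms(4) unfolding A_def in_unit_cube_def by force
    then have "BN q N p i = N" unfolding BN_def by simp
    with bi i1 i2 show False by simp
  qed
  have Af: "finite A" unfolding A_def by simp
  have "Min (p ` A) \<in> p ` A" using Af Ane by (intro Min_in) auto
  then obtain j0 where j0: "j0 \<in> A" "p j0 = Min (p ` A)" by (metis imageE)
  have j0min: "\<And>j. j \<in> A \<Longrightarrow> p j0 \<le> p j" using j0(2) Af by simp
  define p' where "p' = p(j0 := 0)"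
  have cube: "in_unit_cube N p'" using assms(4) unfolding p'_def in_unit_cube_def by auto
  have "{j\<in>{1..N}. p j \<noteq> p' j} \<subseteq> {j0}" unfolding p'_def by auto
  then have "card {j\<in>{1..N}. p j \<noteq> p' j} \<le> card {j0}" by (intro card_mono) auto
  then have ham: "hamming0 N p p' \<le> 1" unfolding hamming0_def by simp
  have j0N: "j0 \<in> {1..N}" "p j0 \<ge> ?t i" using j0(1) unfolding A_def by auto
  have S': "BN q N p' m = card (insert j0 (?S m))" if "m \<ge> 1" for m
  proof -
    have "?t m > 0" using that assms by simp
    then have "{j\<in>{1..N}. 0 \<le> p' j \<and> p' j < ?t m} = insert j0 (?S m)"
      using j0N unfolding p'_def by auto
    then show ?thesis unfolding BN_def by simp
  qed
  have j0Si: "j0 \<notin> ?S i" using j0N by auto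
  have Bi: "BN q N p' i = i"
    using S'[of i] i1 j0Si bi unfolding BN_def by simp
  have above: "BN q N p' m \<noteq> m" if "i < m" "m \<le> N" for m
  proof (cases "p j0 < ?t m")
    case True
    have "0 \<le> p j0" using assms(4) j0N(1) unfolding in_unit_cube_def by auto
    then have "insert j0 (?S m) = ?S m" using j0N True by auto
    then have "BN q N p' m = BN q N p m" using S'[of m] that unfolding BN_def by simp
    moreover have "BN q N p m \<noteq> m" using kt_max[OF that(2), of q p] i1 that by auto
    ultimately show ?thesis by simp
  next
    case False
    have "?S m \<subseteq> ?S i"
    proof
      fix j assume js: "j \<in> ?S m"
      show "j \<in> ?S i"
      proof (rule ccontr)
        assume "j \<notin> ?S i"
        then have "j \<in> A" using js unfolding A_def by auto
        then have "p j0 \<le> p j" by (rule j0min)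
        then show False using js False by auto
      qed
    qed
    then have "card (?S m) \<le> card (?S i)" by (intro card_mono) auto
    then have "card (?S m) \<le> i - 1" using bi unfolding BN_def by simp
    moreover have "card (insert j0 (?S m)) \<le> card (?S m) + 1"
      by (simp add: card_insert_if)
    ultimately have "BN q N p' m \<le> i" using S'[of m] that i1 by simp
    then show ?thesis using that by simp
  qed
  have km: "BN q N p' (ktilde q N p') = ktilde q N p'" "ktilde q N p' \<le> N"
    using kt_mem[of q N p'] by auto
  have "i \<le> ktilde q N p'" using kt_max[OF i2 Bi] .
  moreover have "\<not> i < ktilde q N p'" using above km by auto
  ultimately have "ktilde q N p' = i" by simp
  then show "i \<in> {ktilde q N p' | p'. in_unit_cube N p' \<and> hamming0 N p p' \<le> 1
                              \<and> ktilde q N p' > ktilde q N p}"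
    using cube ham i1 by auto
qed

end
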